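(* Let $k$ be a field and $s,t$ indeterminates over $k$. For $i\geq 1$ let $\tau_i=(-1)^i\left(t^i+st^{i-1}+\dots+s^{i-1}t+s^i\right)\in k[s,t]$. (i) For every $i\geq 1$, let $\overline{A}_i$ be the $i\times(i+2)$ matrix over $k[s,t]$ whose $r$-th row ($1\le r\le i$) has entry $s$ in column $r$, entry $-(t+s)$ in column $r+1$, entry $t$ in column $r+2$, and $0$ elsewhere, and let $B_i$ be the $i\times i$ submatrix of $\overline{A}_i$ obtained by deleting its first and last columns. Then $\det B_i=\tau_i$. (ii) Let $\mathcal{S}$ be an infinite set of positive integers. Suppose that either $k$ has characteristic zero, or $k$ has prime characteristic $p$ and $\mathcal{S}$ contains infinitely many integers of the form $p^m-2$ ($m$ a positive integer). Then the set of irreducible factors in $k[s,t]$ of the polynomials $\tau_i$, $i\in\mathcal{S}$, is infinite. *)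

theory Defs
  imports "HOL-Computational_Algebra.Polynomial_Factorial" "Jordan_Normal_Form.Determinant"
begin

text \<open>Bivariate polynomials k[s,t] are modelled as k[s][t], i.e. type 'a poly poly:
  the outer variable is t, the inner variable is s.\<close>

definition var_s :: "'a::comm_ring_1 poly poly" where
  "var_s = [: [:0, 1:] :]"

definition var_t :: "'a::comm_ring_1 poly poly" where
  "var_t = [:0, 1:]"

definition tau :: "nat \<Rightarrow> 'a::comm_ring_1 poly poly" where
  "tau i = (-1) ^ i * (\<Sum>j = 0..i. var_s ^ j * var_t ^ (i - j))"

definition Abar :: "nat \<Rightarrow> 'a::comm_ring_1 poly poly mat" where
  "Abar i = mat i (i + 2) (\<lambda>(r, c).
     if c = r then var_s
     else if c = r + 1 then - (var_t + var_s)
     else if c = r + 2 then var_t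
     else 0)"

definition Bmat :: "nat \<Rightarrow> 'a::comm_ring_1 poly poly mat" where
  "Bmat i = mat i i (\<lambda>(r, c). Abar i $$ (r, c + 1))"

end

theory Submission
  imports Defs
begin

definition hh :: "nat \<Rightarrow> 'a::comm_ring_1 poly poly" where
  "hh i = (\<Sum>j = 0..i. var_s ^ j * var_t ^ (i - j))"

lemma hh_Suc: "hh (Suc i) = var_t * hh i + var_s ^ Suc i"
proof -
  have "hh (Suc i) = (\<Sum>j = 0..i. var_s ^ j * var_t ^ (Suc i - j)) + var_s ^ Suc i"
    unfolding hh_def by (simp add: sum.atLeast0_atMost_Suc)
  also have "(\<Sum>j = 0..i. var_s ^ j * var_t ^ (Suc i - j)) = var_t * hh i"
    unfolding hh_def sum_distrib_left
    by (rule sum.cong) (auto simp: Suc_diff_le mult_ac)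
  finally show ?thesis .
qed

lemma hh_rec: "hh (Suc (Suc i)) = (var_t + var_s) * hh (Suc i) - var_s * var_t * hh i"
  by (simp only: hh_Suc) (simp add: algebra_simps)

lemma tau_hh: "tau i = (-1)^i * hh i"
  unfolding tau_def hh_def ..

lemma tau_rec: "tau (Suc (Suc i)) = - (var_t + var_s) * tau (Suc i) - var_s * var_t * tau i"
  unfolding tau_hh hh_rec by (simp add: algebra_simps)

lemma Bmat_carrier: "Bmat i \<in> carrier_mat i i"
  unfolding Bmat_def by auto

lemma Bmat_dims[simp]: "dim_row (Bmat i) = i" "dim_col (Bmat i) = i"
  unfolding Bmat_def by auto

lemma Bmat_entry: "r < i \<Longrightarrow> c < i \<Longrightarrow> Bmat i $$ (r, c) =
  (if c + 1 = r then var_s else if c = r then - (var_t + var_s) else if c = r + 1 then var_t else 0)"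
  unfolding Bmat_def Abar_def by auto

lemma det_Bmat_rec:
  "det (Bmat (Suc (Suc n)) :: 'a::comm_ring_1 poly poly mat) =
    - (var_t + var_s) * det (Bmat (Suc n)) - var_t * var_s * det (Bmat n)"
proof -
  let ?B = "Bmat (Suc (Suc n)) :: 'a poly poly mat"
  have d1: "mat_delete ?B (Suc n) (Suc n) = Bmat (Suc n)"
    by (rule eq_matI) (auto simp: mat_delete_def Bmat_entry Bmat_carrier[unfolded carrier_mat_def])
  define M where "M = mat_delete ?B n (Suc n)"
  have Mc: "M \<in> carrier_mat (Suc n) (Suc n)" unfolding M_def
    using mat_delete_carrier[OF Bmat_carrier] by auto
  have d2: "mat_delete M n n = Bmat n"
    by (rule eq_matI) (auto simp: M_def mat_delete_def Bmat_entry Bmat_carrier[unfolded carrier_mat_def])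
  have Mrow: "c < Suc n \<Longrightarrow> M $$ (n, c) = (if c = n then var_s else 0)" for c
    by (auto simp: M_def mat_delete_def Bmat_entry)
  have "det M = (\<Sum>c<Suc n. M $$ (n, c) * cofactor M n c)"
    by (rule laplace_expansion_row[OF Mc]) auto
  also have "\<dots> = (\<Sum>c<Suc n. (if c = n then var_s * cofactor M n n else 0))"
    by (rule sum.cong) (auto simp: Mrow)
  also have "\<dots> = var_s * det (Bmat n)"
    by (simp add: cofactor_def d2)
  finally have dM: "det M = var_s * det (Bmat n)" .
  have "det ?B = (\<Sum>r<Suc (Suc n). ?B $$ (r, Suc n) * cofactor ?B r (Suc n))"
    by (rule laplace_expansion_column[OF Bmat_carrier]) auto
  also have "\<dots> = (\<Sum>r<n. ?B $$ (r, Suc n) * cofactor ?B r (Suc n))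
     + ?B $$ (n, Suc n) * cofactor ?B n (Suc n) + ?B $$ (Suc n, Suc n) * cofactor ?B (Suc n) (Suc n)"
    by simp
  also have "(\<Sum>r<n. ?B $$ (r, Suc n) * cofactor ?B r (Suc n)) = 0"
    by (rule sum.neutral) (auto simp: Bmat_entry)
  also have "?B $$ (n, Suc n) * cofactor ?B n (Suc n) = - var_t * det M"
    by (simp add: Bmat_entry cofactor_def M_def)
  also have "?B $$ (Suc n, Suc n) * cofactor ?B (Suc n) (Suc n) = - (var_t + var_s) * det (Bmat (Suc n))"
    by (simp add: Bmat_entry cofactor_def d1)
  finally show ?thesis using dM by (simp add: algebra_simps)
qed

lemma det_Bmat: "det (Bmat i :: 'a::comm_ring_1 poly poly mat) = tau i"
proof (induction i rule: nat_less_induct)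
  case (1 i)
  show ?case
  proof (cases i)
    case 0
    then show ?thesis using det_dim_zero[OF Bmat_carrier[of 0]] by (simp add: tau_def)
  next
    case (Suc m)
    show ?thesis
    proof (cases m)
      case 0
      have "det (Bmat 1 :: 'a poly poly mat) = Bmat 1 $$ (0,0)"
        by (rule det_single[OF Bmat_carrier])
      then show ?thesis using Suc 0 by (simp add: Bmat_entry tau_def)
    next
      case (Suc k)
      have a: "det (Bmat (Suc k) :: 'a poly poly mat) = tau (Suc k)"
        and b: "det (Bmat k :: 'a poly poly mat) = tau k"
        using 1 \<open>i = Suc m\<close> Suc by auto
      show ?thesis unfolding \<open>i = Suc m\<close> Suc det_Bmat_rec tau_rec a b
        by (simp add: algebra_simps)
    qed
  qed
qed


lemma hh_F: "(var_t - var_s) * hh i = (var_t ^ Suc i - var_s ^ Suc i :: 'a::comm_ring_1 poly poly)"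
proof (induction i)
  case 0 then show ?case by (simp add: hh_def)
next
  case (Suc i)
  have "(var_t - var_s) * (hh (Suc i) :: 'a poly poly) = var_t * ((var_t - var_s) * hh i) + (var_t - var_s) * var_s ^ Suc i"
    by (simp only: hh_Suc) (simp add: algebra_simps)
  also have "\<dots> = var_t ^ Suc (Suc i) - var_s ^ Suc (Suc i)"
  proof -
    have "var_t * ((var_t - var_s) * (hh i :: 'a poly poly)) = var_t * (var_t ^ Suc i - var_s ^ Suc i)"
      using Suc.IH by simp
    then show ?thesis by (simp add: algebra_simps)
  qed
  finally show ?case .
qed

lemma var_t_pow: "var_t ^ n = (monom 1 n :: 'a::comm_ring_1 poly poly)"
  unfolding var_t_def by (simp add: monom_altdef)

lemma var_s_pow: "var_s ^ n = ([: [:0,1:] ^ n :] :: 'a::comm_ring_1 poly poly)"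
  unfolding var_s_def by (induction n) auto

lemma F_coeff: "n > 0 \<Longrightarrow> coeff (var_t ^ n - var_s ^ n :: 'a::comm_ring_1 poly poly) n = 1"
  unfolding var_t_pow var_s_pow by (simp add: coeff_pCons split: nat.splits)

lemma F_degree: "n > 0 \<Longrightarrow> degree (var_t ^ n - var_s ^ n :: 'a::comm_ring_1 poly poly) = n"
proof -
  assume n: "n > 0"
  have "degree (var_t ^ n - var_s ^ n :: 'a poly poly) \<le> n"
    unfolding var_t_pow var_s_pow
    by (rule order.trans[OF degree_diff_le_max]) (auto simp: degree_monom_le)
  moreover have "coeff (var_t ^ n - var_s ^ n :: 'a poly poly) n \<noteq> 0" using F_coeff[OF n] by (metis one_neq_zero)
  ultimately show ?thesis using le_degree by (metis antisym)
qed

lemma degree_ts: "degree (var_t - var_s :: 'a::comm_ring_1 poly poly) = 1"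
  using F_degree[of 1] by simp

lemma tau_ne0_degree:
  "tau i \<noteq> (0 :: 'a::idom poly poly) \<and> degree (tau i :: 'a poly poly) = i"
proof -
  have F: "(var_t - var_s) * hh i = (var_t ^ Suc i - var_s ^ Suc i :: 'a poly poly)" by (rule hh_F)
  have Fne: "(var_t ^ Suc i - var_s ^ Suc i :: 'a poly poly) \<noteq> 0"
    using F_coeff[of "Suc i", where 'a='a] by auto
  then have hne: "hh i \<noteq> (0::'a poly poly)" "(var_t - var_s :: 'a poly poly) \<noteq> 0" using F by auto
  have "Suc i = degree ((var_t - var_s) * hh i :: 'a poly poly)" using F F_degree[of "Suc i", where 'a='a] by simp
  also have "\<dots> = 1 + degree (hh i :: 'a poly poly)"
    using degree_mult_eq[OF hne(2) hne(1)] degree_ts by simp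
  finally have "degree (hh i :: 'a poly poly) = i" by simp
  moreover have "tau i = (-1)^i * (hh i :: 'a poly poly)" by (rule tau_hh)
  moreover have "((-1)^i :: 'a poly poly) = [: (-1)^i :]"
    by (induction i) auto
  ultimately show ?thesis using hne by (auto simp: degree_mult_eq)
qed

lemma F_sqfree:
  fixes y :: "'a::field poly poly"
  assumes n: "n > 0" and c: "of_nat n \<noteq> (0::'a)" and y: "y ^ 2 dvd var_t ^ n - var_s ^ n"
  shows "is_unit y"
proof -
  obtain q where q: "var_t ^ n - var_s ^ n = y * y * q" using y by (auto simp: power2_eq_square elim!: dvdE)
  have "pderiv (var_t ^ n - var_s ^ n :: 'a poly poly) = y * (y * pderiv q + q * pderiv y) + y * q * pderiv y"
    unfolding q by (simp add: pderiv_mult algebra_simps)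
  then have d1: "y dvd pderiv (var_t ^ n - var_s ^ n :: 'a poly poly)" by simp
  obtain m where m: "n = Suc m" using n by (cases n) auto
  have "pderiv (var_t ^ n - var_s ^ n :: 'a poly poly) = smult (of_nat n) (var_t ^ m)"
    unfolding m pderiv_diff pderiv_power_Suc var_s_def var_t_def
    by (simp add: pderiv_pCons)
  then have "y dvd smult (of_nat n) (var_t ^ m)" using d1 by simp
  then have "y dvd smult [:inverse (of_nat n):] (smult (of_nat n) (var_t ^ m))"
    by (rule dvd_smult)
  moreover have "[:inverse (of_nat n::'a):] * of_nat n = 1"
    using c by (simp add: of_nat_poly)
  ultimately have yt: "y dvd var_t ^ m" by (simp only: smult_smult) simp
  then have "y dvd var_t * var_t ^ m" by simp
  then have "y dvd var_t ^ n" unfolding m by simp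
  moreover have "y dvd var_t ^ n - var_s ^ n" using y
    by (metis dvd_mult_left power2_eq_square)
  ultimately have "y dvd var_t ^ n - (var_t ^ n - var_s ^ n)"
    by (rule dvd_diff)
  then have ys: "y dvd var_s ^ n" by simp
  have sne: "(var_s ^ n :: 'a poly poly) \<noteq> 0" unfolding var_s_pow by simp
  have "degree y \<le> degree (var_s ^ n :: 'a poly poly)" by (rule dvd_imp_degree_le[OF ys sne])
  then have "degree y = 0" unfolding var_s_pow by simp
  then have yc: "y = [: coeff y 0 :]" by (metis degree_eq_zeroE coeff_pCons_0)
  have "coeff y 0 dvd coeff (var_t ^ m :: 'a poly poly) m"
    using yt yc const_poly_dvd_iff by metis
  then have "coeff y 0 dvd 1" unfolding var_t_pow by simp
  then show ?thesis using yc is_unit_const_poly_iff by metis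
qed

lemma tau_sqfree:
  fixes y :: "'a::field poly poly"
  assumes c: "of_nat (Suc i) \<noteq> (0::'a)" and y: "y ^ 2 dvd tau i"
  shows "is_unit y"
proof -
  have "tau i dvd hh i" unfolding tau_hh
    by (metis dvd_triv_right mult.assoc mult_1 power_minus1_even power_mult_distrib
        left_minus_one_mult_self)
  then have "tau i dvd (var_t ^ Suc i - var_s ^ Suc i :: 'a poly poly)"
    unfolding hh_F[symmetric] by (rule dvd_mult)
  then show ?thesis using F_sqfree[OF _ c] y dvd_trans by blast
qed


lemma finite_factors_bound:
  fixes S' :: "nat set"
  assumes inf: "infinite S'"
    and nz: "\<And>i. i \<in> S' \<Longrightarrow> of_nat (Suc i) \<noteq> (0::'a::field_gcd)"
  shows "infinite (\<Union>i\<in>S'. prime_factors (tau i :: 'a poly poly))"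
proof
  assume fin: "finite (\<Union>i\<in>S'. prime_factors (tau i :: 'a poly poly))"
  define P where "P = (\<Union>i\<in>S'. prime_factors (tau i :: 'a poly poly))"
  define Q where "Q = \<Prod>P"
  have Qne: "Q \<noteq> 0" unfolding Q_def using fin
    by (auto simp: P_def prod_zero_iff in_prime_factors_iff)
  have dvdQ: "tau i dvd Q" if i: "i \<in> S'" for i
  proof (rule multiplicity_le_imp_dvd)
    show tne: "tau i \<noteq> (0::'a poly poly)" using tau_ne0_degree by blast
    fix p :: "'a poly poly" assume p: "prime p"
    show "multiplicity p (tau i) \<le> multiplicity p Q"
    proof (cases "p dvd tau i")
      case False then show ?thesis by (simp add: not_dvd_imp_multiplicity_0)
    next
      case True
      then have pP: "p \<in> P" unfolding P_def using i p tne by (auto simp: in_prime_factors_iff)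
      have "multiplicity p (tau i) \<le> 1"
      proof (rule ccontr)
        assume "\<not> ?thesis"
        then have "p ^ 2 dvd tau i" by (intro multiplicity_dvd') simp
        then have "is_unit p" by (rule tau_sqfree[OF nz[OF i]])
        then show False using p by simp
      qed
      moreover have "p ^ 1 dvd Q" unfolding Q_def using pP fin P_def[symmetric] by (simp add: dvd_prodI[where f="\<lambda>x. x"])
      then have "1 \<le> multiplicity p Q"
        using p Qne by (intro multiplicity_geI) auto
      ultimately show ?thesis by linarith
    qed
  qed
  have "i \<le> degree Q" if "i \<in> S'" for i
    using dvd_imp_degree_le[OF dvdQ[OF that] Qne] tau_ne0_degree[of i, where 'a='a] by simp
  then have "finite S'" using finite_nat_set_iff_bounded_le by blast
  then show False using inf by simp
qed


theorem lemma1p1: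
  fixes S :: "nat set"
  shows "(\<forall>i\<ge>1. det (Bmat i) = (tau i :: 'a::field_gcd poly poly))
    \<and> ((S \<subseteq> {1..} \<and> infinite S \<and>
         (CHAR('a) = 0 \<or>
          (prime CHAR('a) \<and> infinite {n \<in> S. \<exists>m>0. n = CHAR('a) ^ m - 2})))
        \<longrightarrow> infinite (\<Union>i\<in>S. prime_factors (tau i :: 'a poly poly)))"
proof (intro conjI impI allI)
  fix i :: nat show "1 \<le> i \<Longrightarrow> det (Bmat i) = (tau i :: 'a::field_gcd poly poly)"
    by (rule det_Bmat)
next
  assume H: "S \<subseteq> {1..} \<and> infinite S \<and>
         (CHAR('a) = 0 \<or>
          (prime CHAR('a) \<and> infinite {n \<in> S. \<exists>m>0. n = CHAR('a) ^ m - 2}))"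
  from H consider "CHAR('a) = 0" | "prime CHAR('a)" "infinite {n \<in> S. \<exists>m>0. n = CHAR('a) ^ m - 2}"
    by (elim conjE disjE) auto
  then show "infinite (\<Union>i\<in>S. prime_factors (tau i :: 'a poly poly))"
  proof cases
    case 1
    have "of_nat (Suc i) \<noteq> (0::'a)" if "i \<in> S" for i
      using 1 of_nat_eq_0_iff_char_dvd[of "Suc i", where 'a='a] by (metis dvd_0_left nat.distinct(1))
    then show ?thesis using finite_factors_bound[of S] H by blast
  next
    case 2
    define S' where "S' = {n \<in> S. \<exists>m>0. n = CHAR('a) ^ m - 2}"
    have nz: "of_nat (Suc i) \<noteq> (0::'a)" if iS: "i \<in> S'" for i
    proof
      assume z: "of_nat (Suc i) = (0::'a)"
      obtain m where m: "m > 0" "i = CHAR('a) ^ m - 2" using iS S'_def by auto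
      let ?p = "CHAR('a)"
      have p2: "?p \<ge> 2" using 2 prime_ge_2_nat by blast
      have "?p ^ 1 \<le> ?p ^ m" using m p2 by (intro power_increasing) auto
      then have pm: "?p ^ m \<ge> 2" using p2 by simp
      then have si: "Suc i = ?p ^ m - 1" using m by simp
      have d1: "?p dvd ?p ^ m - 1" using z of_nat_eq_0_iff_char_dvd[of "Suc i", where 'a='a] si by simp
      have d2: "?p dvd ?p ^ m" using m by (simp add: dvd_power)
      have "?p dvd ?p ^ m - (?p ^ m - 1)" by (rule dvd_diff_nat[OF d2 d1])
      then have "?p dvd 1" using pm by simp
      then show False using 2 by simp
    qed
    have "infinite (\<Union>i\<in>S'. prime_factors (tau i :: 'a poly poly))"
      by (rule finite_factors_bound) (use 2 S'_def nz in auto)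
    moreover have "(\<Union>i\<in>S'. prime_factors (tau i :: 'a poly poly)) \<subseteq> (\<Union>i\<in>S. prime_factors (tau i))"
      unfolding S'_def by auto
    ultimately show ?thesis using finite_subset by blast
  qed
qed

end
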